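(* Let $S_{\rm tr}, S_1,\dots,S_m$ be the output of Algorithm 2 (defined in the context) and set $\gamma := \sum_{i=1}^m f_i(S_i)$. If every $f_i$ is monotone and submodular, then $$\sum_{i=1}^m f_i(S_{\rm tr}\cup S_i)\;\ge\;\max\Bigl\{\gamma,\;(1-1/e)(\mathrm{OPT}-2\gamma)+\gamma\Bigr\}.$$ Consequently $\sum_{i=1}^m f_i(S_{\rm tr}\cup S_i)\ge \tfrac12\,\mathrm{OPT}$ for every value of $\gamma$.
   Context: $V$ is a finite ground set with $|V|=n$; $k,l$ are integers with $1\le l<k\le n$. For $i=1,\dots,m$, $f_i:2^V\to\mathbb{R}_{\ge 0}$ is a set function; $f_i$ is monotone if $A\subseteq B\Rightarrow f_i(A)\le f_i(B)$ and submodular if $f_i(A)+f_i(B)\ge f_i(A\cup B)+f_i(A\cap B)$ for all $A,B\subseteq V$. Write $\Delta_i(e\mid S)=f_i(S\cup\{e\})-f_i(S)$. Define $$\mathrm{OPT}=\max_{S_{\rm tr}\subseteq V,\,|S_{\rm tr}|\le l}\;\sum_{i=1}^m\;\max_{S_i\subseteq V,\,|S_i|\le k-l} f_i(S_{\rm tr}\cup S_i).$$ Algorithm 2: start with $S_{\rm tr}=S_1=\dots=S_m=\emptyset$. Phase 1: for each $i=1,\dots,m$ and $t=1,\dots,k-l$, choose $e_i^*\in\arg\max_{e\in V\setminus S_i}\Delta_i(e\mid S_i)$ and set $S_i\leftarrow S_i\cup\{e_i^*\}$. Phase 2: for $t=1,\dots,l$, choose $e^*\in\arg\max_{e\in V\setminus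 S_{\rm tr}}\sum_{i=1}^m\Delta_i(e\mid S_{\rm tr}\cup S_i)$ and set $S_{\rm tr}\leftarrow S_{\rm tr}\cup\{e^*\}$. Output $S_{\rm tr},S_1,\dots,S_m$. Ties in all argmax's are broken arbitrarily. *)

theory Defs
  imports Complex_Main
begin

definition monotone_sf :: "'a set \<Rightarrow> ('a set \<Rightarrow> real) \<Rightarrow> bool" where
  "monotone_sf V f \<longleftrightarrow> (\<forall>A B. A \<subseteq> B \<and> B \<subseteq> V \<longrightarrow> f A \<le> f B)"

definition submodular_sf :: "'a set \<Rightarrow> ('a set \<Rightarrow> real) \<Rightarrow> bool" where
  "submodular_sf V f \<longleftrightarrow>
     (\<forall>A B. A \<subseteq> V \<and> B \<subseteq> V \<longrightarrow> f A + f B \<ge> f (A \<union> B) + f (A \<inter> B))"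

definition nonneg_sf :: "'a set \<Rightarrow> ('a set \<Rightarrow> real) \<Rightarrow> bool" where
  "nonneg_sf V f \<longleftrightarrow> (\<forall>A. A \<subseteq> V \<longrightarrow> 0 \<le> f A)"

definition marg :: "('a set \<Rightarrow> real) \<Rightarrow> 'a \<Rightarrow> 'a set \<Rightarrow> real" where
  "marg f e S = f (insert e S) - f S"

definition greedy_run :: "'a set \<Rightarrow> ('a set \<Rightarrow> 'a \<Rightarrow> real) \<Rightarrow> nat \<Rightarrow> (nat \<Rightarrow> 'a set) \<Rightarrow> bool" where
  "greedy_run V gain r S \<longleftrightarrow> S 0 = {} \<and>
     (\<forall>t<r. \<exists>e \<in> V - S t. (\<forall>e' \<in> V - S t. gain (S t) e' \<le> gain (S t) e) \<and>
                            S (Suc t) = insert e (S t))"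

definition OPT :: "'a set \<Rightarrow> nat \<Rightarrow> (nat \<Rightarrow> 'a set \<Rightarrow> real) \<Rightarrow> nat \<Rightarrow> nat \<Rightarrow> real" where
  "OPT V m f k l = Max ((\<lambda>T. \<Sum>i=1..m. Max ((\<lambda>S. f i (T \<union> S)) ` {S. S \<subseteq> V \<and> card S \<le> k - l}))
                        ` {T. T \<subseteq> V \<and> card T \<le> l})"

end

theory Submission
  imports Defs
begin

lemma greedy_sub:
  assumes "greedy_run V gain r S" shows "t \<le> r \<Longrightarrow> S t \<subseteq> V"
proof (induction t)
  case 0 then show ?case using assms by (simp add: greedy_run_def)
next
  case (Suc t)
  then have "t < r" by simp
  then obtain e where "e \<in> V - S t" "S (Suc t) = insert e (S t)"
    using assms unfolding greedy_run_def by blast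
  then show ?case using Suc by auto
qed

lemma greedy_mono:
  assumes "greedy_run V gain r S" shows "t \<le> t' \<Longrightarrow> t' \<le> r \<Longrightarrow> S t \<subseteq> S t'"
proof (induction t')
  case 0 then show ?case by simp
next
  case (Suc t')
  then have "t' < r" by simp
  then obtain e where "e \<in> V - S t'" "S (Suc t') = insert e (S t')"
    using assms unfolding greedy_run_def by blast
  then show ?case using Suc by (cases "t = Suc t'") auto
qed

lemma sm_app:
  assumes "submodular_sf V h" "A \<subseteq> V" "B \<subseteq> V"
  shows "h (A \<union> B) + h (A \<inter> B) \<le> h A + h B"
  using assms unfolding submodular_sf_def by blast

lemma mo_app:
  assumes "monotone_sf V h" "A \<subseteq> B" "B \<subseteq> V"
  shows "h A \<le> h B"
  using assms unfolding monotone_sf_def by blast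

lemma marg_nonneg:
  assumes "monotone_sf V h" "e \<in> V" "X \<subseteq> V" shows "0 \<le> marg h e X"
proof -
  have "h X \<le> h (insert e X)"
    using assms(1) assms(2,3) unfolding monotone_sf_def by blast
  then show ?thesis by (simp add: marg_def)
qed

lemma marg_dec:
  assumes mo: "monotone_sf V h" and sm: "submodular_sf V h"
    and AB: "A \<subseteq> B" "B \<subseteq> V" and e: "e \<in> V"
  shows "marg h e B \<le> marg h e A"
proof (cases "e \<in> B")
  case True
  then have "marg h e B = 0" by (simp add: marg_def insert_absorb)
  moreover have "0 \<le> marg h e A" using marg_nonneg[OF mo e] AB by auto
  ultimately show ?thesis by simp
next
  case False
  have "h (insert e A) + h B \<ge> h (insert e A \<union> B) + h (insert e A \<inter> B)"
  proof -
    have "insert e A \<subseteq> V" using AB e by auto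
    then show ?thesis using sm AB unfolding submodular_sf_def by blast
  qed
  moreover have "insert e A \<union> B = insert e B" using AB by auto
  moreover have "insert e A \<inter> B = A" using AB False by auto
  ultimately show ?thesis by (simp add: marg_def)
qed

lemma union_bound:
  assumes mo: "monotone_sf V h" and sm: "submodular_sf V h"
  shows "finite X \<Longrightarrow> X \<subseteq> V \<Longrightarrow> S \<subseteq> V \<Longrightarrow> h (S \<union> X) - h S \<le> (\<Sum>x\<in>X. marg h x S)"
proof (induction X rule: finite_induct)
  case empty then show ?case by simp
next
  case (insert x F)
  have "marg h x (S \<union> F) \<le> marg h x S"
    using marg_dec[OF mo sm, of S "S \<union> F" x] insert by auto
  moreover have "h (S \<union> insert x F) = h (S \<union> F) + marg h x (S \<union> F)"
    by (simp add: marg_def)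
  ultimately show ?case using insert by simp
qed

lemma greedy_step:
  assumes g: "greedy_run V (\<lambda>X e. marg h e X) r S" and mo: "monotone_sf V h"
    and t: "t < r" and x: "x \<in> V"
  shows "marg h x (S t) \<le> h (S (Suc t)) - h (S t)"
proof -
  obtain e where e: "e \<in> V - S t" "\<forall>e' \<in> V - S t. marg h e' (S t) \<le> marg h e (S t)"
    "S (Suc t) = insert e (S t)"
    using g t unfolding greedy_run_def by blast
  have St: "S t \<subseteq> V" using greedy_sub[OF g] t by simp
  have gain: "h (S (Suc t)) - h (S t) = marg h e (S t)" using e(3) by (simp add: marg_def)
  show ?thesis
  proof (cases "x \<in> S t")
    case True
    then have "marg h x (S t) = 0" by (simp add: marg_def insert_absorb)
    then show ?thesis using gain marg_nonneg[OF mo _ St, of e] e(1) by simp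
  next
    case False then show ?thesis using e x gain by auto
  qed
qed

lemma greedy_phase2:
  assumes g: "greedy_run V (\<lambda>X e. marg h e X) r S" and mo: "monotone_sf V h"
    and sm: "submodular_sf V h" and fin: "finite V"
    and t: "t < r" and X: "X \<subseteq> V" "card X \<le> r"
  shows "h X - h (S t) \<le> real r * (h (S (Suc t)) - h (S t))"
proof -
  let ?g = "h (S (Suc t)) - h (S t)"
  have St: "S t \<subseteq> V" using greedy_sub[OF g] t by simp
  have fX: "finite X" using X fin finite_subset by blast
  have "h X \<le> h (S t \<union> X)" using mo St X unfolding monotone_sf_def by auto
  also have "h (S t \<union> X) \<le> h (S t) + (\<Sum>x\<in>X. marg h x (S t))"
    using union_bound[OF mo sm fX X(1) St] by simp
  also have "(\<Sum>x\<in>X. marg h x (S t)) \<le> (\<Sum>x\<in>X. ?g)"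
    by (rule sum_mono) (use greedy_step[OF g mo t] X in auto)
  also have "(\<Sum>x\<in>X. ?g) = real (card X) * ?g" by simp
  also have "\<dots> \<le> real r * ?g"
  proof (rule mult_right_mono)
    obtain e where e: "e \<in> V - S t" "S (Suc t) = insert e (S t)"
      using g t unfolding greedy_run_def by blast
    then show "0 \<le> ?g" using marg_nonneg[OF mo _ St, of e] by (simp add: marg_def)
  qed (use X in simp)
  finally show ?thesis by simp
qed

lemma greedy_phase1:
  assumes g: "greedy_run V (\<lambda>X e. marg h e X) r S" and mo: "monotone_sf V h"
    and sm: "submodular_sf V h" and fin: "finite V"
    and r: "1 \<le> r" and X: "X \<subseteq> V" "card X \<le> r"
  shows "h (S r \<union> X) - h (S r) \<le> h (S r) - h {}"
proof -
  have Sr: "S r \<subseteq> V" using greedy_sub[OF g] by simp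
  have S0: "S 0 = {}" using g by (simp add: greedy_run_def)
  define M where "M = (h (S r) - h {}) / real r"
  have rM: "real r * M = h (S r) - h {}" using r by (simp add: M_def)
  have M0: "0 \<le> M" using mo Sr r unfolding M_def monotone_sf_def by auto
  have each: "marg h x (S r) \<le> M" if x: "x \<in> V" for x
  proof -
    have "(\<Sum>t<r. marg h x (S r)) \<le> (\<Sum>t<r. h (S (Suc t)) - h (S t))"
    proof (rule sum_mono)
      fix t assume "t \<in> {..<r}"
      then have t: "t < r" by simp
      have "marg h x (S r) \<le> marg h x (S t)"
        using marg_dec[OF mo sm greedy_mono[OF g, of t r] Sr x] t by simp
      also have "\<dots> \<le> h (S (Suc t)) - h (S t)" by (rule greedy_step[OF g mo t x])
      finally show "marg h x (S r) \<le> h (S (Suc t)) - h (S t)" .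
    qed
    also have "\<dots> = h (S r) - h (S 0)" by (rule sum_lessThan_telescope)
    finally have "real r * marg h x (S r) \<le> real r * M" using rM S0 by simp
    then show ?thesis using r by simp
  qed
  have fX: "finite X" using X fin finite_subset by blast
  have "h (S r \<union> X) - h (S r) \<le> (\<Sum>x\<in>X. marg h x (S r))"
    using union_bound[OF mo sm fX X(1) Sr] by simp
  also have "\<dots> \<le> (\<Sum>x\<in>X. M)" by (rule sum_mono) (use each X in auto)
  also have "\<dots> = real (card X) * M" by simp
  also have "\<dots> \<le> real r * M" using M0 X by (simp add: mult_right_mono)
  finally show ?thesis using rM by simp
qed

theorem proposition2:
  fixes V :: "'a set" and n m k l :: nat and f :: "nat \<Rightarrow> 'a set \<Rightarrow> real"
    and S :: "nat \<Rightarrow> nat \<Rightarrow> 'a set" and Str :: "nat \<Rightarrow> 'a set"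
  assumes finV: "finite V" and cardV: "card V = n"
    and kl: "1 \<le> l" "l < k" "k \<le> n" and m: "1 \<le> m"
    and nonneg: "\<forall>i\<in>{1..m}. nonneg_sf V (f i)"
    and mono: "\<forall>i\<in>{1..m}. monotone_sf V (f i)"
    and submod: "\<forall>i\<in>{1..m}. submodular_sf V (f i)"
    and phase1: "\<forall>i\<in>{1..m}. greedy_run V (\<lambda>X e. marg (f i) e X) (k - l) (S i)"
    and phase2: "greedy_run V (\<lambda>X e. \<Sum>i=1..m. marg (f i) e (X \<union> S i (k - l))) l Str"
  shows "(\<Sum>i=1..m. f i (Str l \<union> S i (k - l))) \<ge>
           max (\<Sum>i=1..m. f i (S i (k - l)))
               ((1 - 1 / exp 1) * (OPT V m f k l - 2 * (\<Sum>i=1..m. f i (S i (k - l))))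
                 + (\<Sum>i=1..m. f i (S i (k - l))))
       \<and> (\<Sum>i=1..m. f i (Str l \<union> S i (k - l))) \<ge> OPT V m f k l / 2"
proof -
  define r where "r = k - l"
  define G where "G = (\<lambda>T. \<Sum>i=1..m. f i (T \<union> S i r))"
  define \<gamma> where "\<gamma> = (\<Sum>i=1..m. f i (S i r))"
  have r1: "1 \<le> r" using kl r_def by simp
  have Si: "S i r \<subseteq> V" if "i \<in> {1..m}" for i
    using greedy_sub[OF phase1[rule_format, OF that]] r_def by simp
  have Gmono: "monotone_sf V G"
    unfolding monotone_sf_def G_def
  proof (intro allI impI sum_mono)
    fix A B i assume AB: "A \<subseteq> B \<and> B \<subseteq> V" and i: "i \<in> {1..m}"
    have "A \<union> S i r \<subseteq> B \<union> S i r" "B \<union> S i r \<subseteq> V" using AB Si[OF i] by auto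
    then show "f i (A \<union> S i r) \<le> f i (B \<union> S i r)"
      using mono i by (intro mo_app) auto
  qed
  have Gsub: "submodular_sf V G"
    unfolding submodular_sf_def
  proof (intro allI impI)
    fix A B assume AB: "A \<subseteq> V \<and> B \<subseteq> V"
    have "G (A \<union> B) + G (A \<inter> B) = (\<Sum>i=1..m. f i (A \<union> B \<union> S i r) + f i (A \<inter> B \<union> S i r))"
      unfolding G_def by (simp add: sum.distrib)
    also have "\<dots> \<le> (\<Sum>i=1..m. f i (A \<union> S i r) + f i (B \<union> S i r))"
    proof (rule sum_mono)
      fix i assume i: "i \<in> {1..m}"
      have sub: "A \<union> S i r \<subseteq> V" "B \<union> S i r \<subseteq> V" using AB Si[OF i] by auto
      have "(A \<union> S i r) \<union> (B \<union> S i r) = A \<union> B \<union> S i r"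
           "(A \<union> S i r) \<inter> (B \<union> S i r) = A \<inter> B \<union> S i r" by auto
      then show "f i (A \<union> B \<union> S i r) + f i (A \<inter> B \<union> S i r) \<le> f i (A \<union> S i r) + f i (B \<union> S i r)"
        using sm_app[of V "f i", OF _ sub] submod i by simp
    qed
    also have "\<dots> = G A + G B" unfolding G_def by (simp add: sum.distrib)
    finally show "G (A \<union> B) + G (A \<inter> B) \<le> G A + G B" .
  qed
  have gainG: "(\<lambda>X e. \<Sum>i=1..m. marg (f i) e (X \<union> S i (k - l))) = (\<lambda>X e. marg G e X)"
    by (simp add: G_def marg_def sum_subtractf r_def)
  have g2: "greedy_run V (\<lambda>X e. marg G e X) l Str" using phase2 gainG by simp
  have StrV: "Str l \<subseteq> V" using greedy_sub[OF g2] by simp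
  have Str0: "Str 0 = {}" using g2 by (simp add: greedy_run_def)
  have G0: "G {} = \<gamma>" by (simp add: G_def \<gamma>_def)
  have part1: "\<gamma> \<le> G (Str l)" using mo_app[OF Gmono _ StrV, of "{}"] G0 by simp
  define \<T> where "\<T> = {T. T \<subseteq> V \<and> card T \<le> l}"
  define \<S> where "\<S> = {S. S \<subseteq> V \<and> card S \<le> k - l}"
  have "\<T> \<subseteq> Pow V" unfolding \<T>_def by blast
  then have finT: "finite \<T>" using finV by (rule finite_subset[OF _ finite_Pow_iff[THEN iffD2]])
  have "{} \<in> \<T>" unfolding \<T>_def by simp
  then have neT: "\<T> \<noteq> {}" by blast
  have "\<S> \<subseteq> Pow V" unfolding \<S>_def by blast
  then have finS: "finite \<S>" using finV by (rule finite_subset[OF _ finite_Pow_iff[THEN iffD2]])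
  have "{} \<in> \<S>" unfolding \<S>_def by simp
  then have neS: "\<S> \<noteq> {}" by blast
  have "OPT V m f k l \<in> (\<lambda>T. \<Sum>i=1..m. Max ((\<lambda>S. f i (T \<union> S)) ` \<S>)) ` \<T>"
    unfolding OPT_def \<T>_def[symmetric] \<S>_def[symmetric] by (rule Max_in) (use finT neT in auto)
  then obtain T where T: "T \<subseteq> V" "card T \<le> l"
    and OPTeq: "OPT V m f k l = (\<Sum>i=1..m. Max ((\<lambda>S. f i (T \<union> S)) ` \<S>))"
    unfolding \<T>_def by auto
  have OPTle: "OPT V m f k l \<le> G T + \<gamma>"
  proof -
    have "OPT V m f k l \<le> (\<Sum>i=1..m. f i (T \<union> S i r) + f i (S i r))"
      unfolding OPTeq
    proof (rule sum_mono)
      fix i assume i: "i \<in> {1..m}"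
      have "Max ((\<lambda>S. f i (T \<union> S)) ` \<S>) \<in> (\<lambda>S. f i (T \<union> S)) ` \<S>"
        by (rule Max_in) (use finS neS in auto)
      then obtain U where U: "U \<subseteq> V" "card U \<le> r"
        and MU: "Max ((\<lambda>S. f i (T \<union> S)) ` \<S>) = f i (T \<union> U)"
        unfolding \<S>_def r_def by auto
      have mi: "monotone_sf V (f i)" and si: "submodular_sf V (f i)" and ni: "nonneg_sf V (f i)"
        using mono submod nonneg i by auto
      have SV: "S i r \<subseteq> V" using Si[OF i] .
      have f1: "f i (T \<union> U) \<le> f i (T \<union> S i r \<union> U)"
        using T U SV by (intro mo_app[OF mi]) auto
      have "f i (T \<union> S i r \<union> U) + f i ((T \<union> S i r) \<inter> (S i r \<union> U))
                  \<le> f i (T \<union> S i r) + f i (S i r \<union> U)"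
      proof -
        have "(T \<union> S i r) \<union> (S i r \<union> U) = T \<union> S i r \<union> U" by auto
        moreover have "T \<union> S i r \<subseteq> V" "S i r \<union> U \<subseteq> V" using T U SV by auto
        ultimately show ?thesis using sm_app[OF si, of "T \<union> S i r" "S i r \<union> U"] by simp
      qed
      moreover have "f i (S i r) \<le> f i ((T \<union> S i r) \<inter> (S i r \<union> U))"
      proof -
        have "S i r \<subseteq> (T \<union> S i r) \<inter> (S i r \<union> U)" "(T \<union> S i r) \<inter> (S i r \<union> U) \<subseteq> V"
          using T U SV by auto
        then show ?thesis by (rule mo_app[OF mi])
      qed
      moreover have "f i (S i r \<union> U) - f i (S i r) \<le> f i (S i r) - f i {}"
        using greedy_phase1[OF phase1[rule_format, OF i, folded r_def] mi si finV r1 U] .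
      moreover have "0 \<le> f i {}" using ni unfolding nonneg_sf_def by auto
      ultimately have "f i (T \<union> S i r \<union> U) \<le> f i (T \<union> S i r) + f i (S i r)" by linarith
      with f1 show "Max ((\<lambda>S. f i (T \<union> S)) ` \<S>) \<le> f i (T \<union> S i r) + f i (S i r)"
        using MU by simp
    qed
    also have "\<dots> = G T + \<gamma>" unfolding G_def \<gamma>_def by (simp add: sum.distrib)
    finally show ?thesis .
  qed
  define c where "c = 1 - 1 / real l"
  define d where "d t = G T - G (Str t)" for t
  have lpos: "0 < real l" using kl by simp
  have c0: "0 \<le> c" using kl unfolding c_def by (simp add: field_simps)
  have step: "d (Suc t) \<le> c * d t" if t: "t < l" for t
  proof -
    have "G T - G (Str t) \<le> real l * (G (Str (Suc t)) - G (Str t))"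
      by (rule greedy_phase2[OF g2 Gmono Gsub finV t T])
    then have "d t \<le> (d t - d (Suc t)) * real l" unfolding d_def by (simp add: algebra_simps)
    then have "d t / real l \<le> d t - d (Suc t)" using lpos by (simp add: pos_divide_le_eq)
    moreover have "c * d t = d t - d t / real l" unfolding c_def by (simp add: algebra_simps)
    ultimately show ?thesis by linarith
  qed
  have pow: "t \<le> l \<Longrightarrow> d t \<le> c ^ t * d 0" for t
  proof (induction t)
    case 0 then show ?case by simp
  next
    case (Suc t)
    then have "d (Suc t) \<le> c * d t" using step by simp
    also have "\<dots> \<le> c * (c ^ t * d 0)" using Suc c0 by (simp add: mult_left_mono)
    finally show ?case by (simp add: mult.assoc)
  qed
  have cl: "c ^ l \<le> 1 / exp 1"
  proof -
    have "c \<le> exp (- 1 / real l)" unfolding c_def using exp_ge_add_one_self[of "- 1 / real l"] by simp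
    then have "c ^ l \<le> exp (- 1 / real l) ^ l" using c0 by (simp add: power_mono)
    also have "\<dots> = exp (real l * (- 1 / real l))" by (rule exp_of_nat_mult[symmetric])
    also have "\<dots> = exp (- 1)" using lpos by simp
    also have "\<dots> = 1 / exp 1" by (simp add: exp_minus inverse_eq_divide)
    finally show ?thesis .
  qed
  have d0: "d 0 = G T - \<gamma>" unfolding d_def using Str0 G0 by simp
  have e1: "1 \<le> exp (1::real)" by simp
  have e2: "2 \<le> exp (1::real)" using exp_ge_add_one_self[of 1] by simp
  have ce: "0 \<le> 1 - 1 / exp (1::real)" using e1 by simp
  have part2: "(1 - 1 / exp 1) * (OPT V m f k l - 2 * \<gamma>) + \<gamma> \<le> G (Str l)"
  proof (cases "0 \<le> d 0")
    case True
    have "c ^ l * d 0 \<le> 1 / exp 1 * d 0" using cl True by (rule mult_right_mono)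
    then have "d l \<le> d 0 / exp 1" using pow[of l] by simp
    then have "G T - d 0 / exp 1 \<le> G (Str l)" unfolding d_def by simp
    moreover have "(1 - 1 / exp 1) * (OPT V m f k l - 2 * \<gamma>) \<le> (1 - 1 / exp 1) * d 0"
      using ce OPTle d0 by (intro mult_left_mono) auto
    moreover have "G T - d 0 / exp 1 = (1 - 1 / exp 1) * d 0 + \<gamma>" using d0 by (simp add: algebra_simps)
    ultimately show ?thesis by linarith
  next
    case False
    have "(1 - 1 / exp 1) * (OPT V m f k l - 2 * \<gamma>) \<le> (1 - 1 / exp 1) * d 0"
      using ce OPTle d0 by (intro mult_left_mono) auto
    also have "\<dots> \<le> 0" using ce False by (simp add: mult_nonneg_nonpos)
    finally show ?thesis using part1 by linarith
  qed
  have part3: "OPT V m f k l / 2 \<le> G (Str l)"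
  proof (cases "OPT V m f k l \<le> 2 * \<gamma>")
    case True then show ?thesis using part1 by linarith
  next
    case False
    define D where "D = OPT V m f k l - 2 * \<gamma>"
    have D: "0 < D" using False D_def by simp
    have "1 / exp (1::real) \<le> 1 / 2" using e2 by (simp add: field_simps)
    then have "D * (1 / exp 1) \<le> D * (1 / 2)" using D by (intro mult_left_mono) auto
    moreover have "(1 - 1 / exp 1) * D = D - D * (1 / exp 1)" by (simp add: algebra_simps)
    ultimately have "D / 2 \<le> (1 - 1 / exp 1) * D" by linarith
    moreover have "(1 - 1 / exp 1) * D + \<gamma> \<le> G (Str l)" using part2 unfolding D_def .
    moreover have "OPT V m f k l / 2 = D / 2 + \<gamma>" unfolding D_def by (simp add: field_simps)
    ultimately show ?thesis by linarith
  qed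
  have GS: "G (Str l) = (\<Sum>i=1..m. f i (Str l \<union> S i (k - l)))" by (simp add: G_def r_def)
  have gam: "\<gamma> = (\<Sum>i=1..m. f i (S i (k - l)))" by (simp add: \<gamma>_def r_def)
  show ?thesis using part1 part2 part3 unfolding GS[symmetric] gam[symmetric] by simp
qed

end
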